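(* Under the setting below, with positive step sizes $\eta_t$, let $\lambda^*\in[0,\pi]$ minimize $\sum_{t=1}^TL_t(x_t^*,z_t^*,\lambda)$ over $\lambda\in[0,\pi]$. Then the shadow prices $\hat\lambda_t$ generated by strategy $\mathcal A$ satisfy $$G:=\sum_{t=1}^T\big[L_t(x^*_t,z^*_t,\lambda^* )-L_t(x^*_t,z^*_t,\hat\lambda_t)\big]\le\Xi\Psi\sum_{t=1}^T\eta_t.$$
   Context: Fix an integer $T\ge 1$, a data cap $Q>0$ and an overage fee $\pi>0$; let $q=Q/T$. Fix constants $\bar d\ge 0$, $\bar r\ge 0$. For each $t\in\{1,\dots,T\}$ fix reals $d_t\in[0,\bar d]$, $r_t\in[0,\bar r]$, $c_t>0$, $p_t>0$, $\theta_t>0$, $\beta_t>0$ and functions $u_t,e_t:[0,\infty)\to\mathbb{R}$ such that: $u_t$ is continuous, increasing and strictly concave, differentiable on $(0,\infty)$, and $u_t':(0,\infty)\to(0,\infty)$ is a strictly decreasing bijection with inverse $u_t'^{-1}$; $e_t$ is increasing, strictly convex and continuously differentiable, and $e_t':[0,\infty)\to[0,\infty)$ is a strictly increasing bijection with inverse $e_t'^{-1}$. For $0\le z\le x\le 1$ let $\tilde f_t(x,z)=\theta_t u_t(x)-\beta_t e_t((x-z)c_t)-p_t c_t z$ and $\tilde h_t(x,z)=d_t x+r_t z$, and $L_t(x,z,\lambda)=\tilde f_t(x,z)-\lambda(\tilde h_t(x,z)-q)$. Define $\tilde S(x,z)=\sum_{t=1}^T\tilde f_t(x_t,z_t)-\pi\big[\sum_{t=1}^T\tilde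 h_t(x_t,z_t)-Q\big]^+$ and let $(x^*,z^* )$ be a maximizer of $\tilde S$ over $\{0\le z_t\le x_t\le 1\ \forall t\}$. For $\lambda\ge 0$ and $\beta>0$ write $a_t(\beta,\lambda)=\frac{1}{c_t}\,e_t'^{-1}\!\Big(\frac{p_tc_t+r_t\lambda}{\beta c_t}\Big)$ and $X_t(\lambda)=p_tc_t+(d_t+r_t)\lambda$. Define the sets (all with $\beta>0$): $\Omega^{I}_t(\lambda)=\{(\beta,\theta):\theta>\frac{\beta c_t e_t'(c_t)+d_t\lambda}{u_t'(1)},\ \beta<\frac{p_tc_t+r_t\lambda}{c_te_t'(c_t)}\}$; $\Omega^{II}_t(\lambda)=\{(\beta,\theta):\theta>\frac{X_t(\lambda)}{u_t'(1)},\ \beta\ge\frac{p_tc_t+r_t\lambda}{c_te_t'(c_t)}\}$; $\Omega^{III}_t(\lambda)=\{(\beta,\theta):\frac{X_t(\lambda)}{u_t'(a_t(\beta,\lambda))}\le\theta\le\frac{X_t(\lambda)}{u_t'(1)}\}$; $\Omega^{IV}_t(\lambda)=\{(\beta,\theta):\theta<\frac{X_t(\lambda)}{u_t'(a_t(\beta,\lambda))},\ \theta\le\frac{\beta c_te_t'(c_t)+d_t\lambda}{u_t'(1)}\}$. Let $z^{II}_t(\lambda)=1-a_t(\beta_t,\lambda)$, $x^{III}_t(\lambda)=u_t'^{-1}(X_t(\lambda)/\theta_t)$, $z^{III}_t(\lambda)=x^{III}_t(\lambda)-a_t(\beta_t,\lambda)$, and let $x^{IV}_t(\lambda)\in(0,1]$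 be the solution of $\theta_tu_t'(x)-\beta_tc_te_t'(xc_t)=d_t\lambda$. Define $W_t(\lambda)=(1,0)$ if $(\beta_t,\theta_t)\in\Omega^I_t(\lambda)$; $(1,z^{II}_t(\lambda))$ if in $\Omega^{II}_t(\lambda)$; $(x^{III}_t(\lambda),z^{III}_t(\lambda))$ if in $\Omega^{III}_t(\lambda)$; $(x^{IV}_t(\lambda),0)$ if in $\Omega^{IV}_t(\lambda)$. Online strategy $\mathcal A$: set $\hat\lambda_1=0$; for $t=1,\dots,T$ set $(\hat x_t,\hat z_t)=W_t(\hat\lambda_t)$ and $\hat\lambda_{t+1}=\mathcal P_{[0,\pi]}\big(\hat\lambda_t+\eta_t[\tilde h_t(\hat x_t,\hat z_t)-q]\big)$, where $\mathcal P_{[0,\pi]}$ is the projection onto $[0,\pi]$. Maximal demand divergence: $\Xi=\max(|q-\bar d-\bar r|,q)$. Consumption fluctuation: with $l_t=q-\tilde h_t(x_t^*,z_t^* )$, $\bar l=\frac1T\sum_{t=1}^Tl_t$, $\psi_t=|t\bar l-\sum_{i=1}^tl_i|$, set $\Psi=\max_{1\le t\le T}\psi_t$. *)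

theory Defs
  imports "HOL-Analysis.Analysis"
begin

definition strict_convex_on :: "real set \<Rightarrow> (real \<Rightarrow> real) \<Rightarrow> bool" where
  "strict_convex_on S f \<longleftrightarrow> convex S \<and>
    (\<forall>x\<in>S. \<forall>y\<in>S. \<forall>v. x \<noteq> y \<and> 0 < v \<and> v < 1 \<longrightarrow>
       f ((1 - v) * x + v * y) < (1 - v) * f x + v * f y)"

definition strict_concave_on :: "real set \<Rightarrow> (real \<Rightarrow> real) \<Rightarrow> bool" where
  "strict_concave_on S f \<longleftrightarrow> strict_convex_on S (\<lambda>x. - f x)"

text \<open>a_t(beta,lambda); de is e_t' (with inverse taken on [0,inf)).\<close>
definition a_fun :: "real \<Rightarrow> real \<Rightarrow> real \<Rightarrow> (real \<Rightarrow> real) \<Rightarrow> real \<Rightarrow> real \<Rightarrow> real" where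
  "a_fun c p r de beta lam = (1 / c) * inv_into {0..} de ((p * c + r * lam) / (beta * c))"

definition X_fun :: "real \<Rightarrow> real \<Rightarrow> real \<Rightarrow> real \<Rightarrow> real \<Rightarrow> real" where
  "X_fun c p d r lam = p * c + (d + r) * lam"

text \<open>The decision rule W_t(lambda). Regions I, II, III are tested in turn; otherwise the
  parameters lie in region IV (the four regions cover all (beta,theta) with beta > 0).
  du is u_t', de is e_t'.\<close>
definition W :: "real \<Rightarrow> real \<Rightarrow> real \<Rightarrow> real \<Rightarrow> real \<Rightarrow> real \<Rightarrow>
    (real \<Rightarrow> real) \<Rightarrow> (real \<Rightarrow> real) \<Rightarrow> real \<Rightarrow> real \<times> real" where
  "W d r c p theta beta du de lam =
    (let a = a_fun c p r de beta lam;
         X = X_fun c p d r lam;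
         thr = (p * c + r * lam) / (c * de c)
     in if theta > (beta * c * de c + d * lam) / du 1 \<and> beta < thr then (1, 0)
        else if theta > X / du 1 \<and> beta \<ge> thr then (1, 1 - a)
        else if X / du a \<le> theta \<and> theta \<le> X / du 1 then
          (inv_into {0<..} du (X / theta), inv_into {0<..} du (X / theta) - a)
        else (THE x. 0 < x \<and> x \<le> 1 \<and> theta * du x - beta * c * de (x * c) = d * lam, 0))"

definition proj :: "real \<Rightarrow> real \<Rightarrow> real" where
  "proj b y = max 0 (min b y)"

end

theory Submission imports Defs begin

lemma anti_bij_cont:
  fixes f :: "real \<Rightarrow> real"
  assumes mo: "strict_antimono_on {0<..} f" and bj: "bij_betw f {0<..} {0<..}"
  shows "continuous_on {0<..} f"
  unfolding continuous_on_iff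
proof (intro ballI allI impI)
  fix x e :: real assume x: "x \<in> {0<..}" and e: "e > 0"
  have md: "\<And>a b. a \<in> {0<..} \<Longrightarrow> b \<in> {0<..} \<Longrightarrow> a < b \<Longrightarrow> f b < f a"
    using monotone_onD[OF mo] by blast
  have im: "f ` {0<..} = {0<..}" using bj by (simp add: bij_betw_def)
  have fx: "f x > 0" using x im by auto
  define y1 where "y1 = f x + e/2"
  define y2 where "y2 = max (f x / 2) (f x - e/2)"
  have "y1 \<in> f ` {0<..}" using im fx e by (auto simp: y1_def)
  then obtain a where a: "a > 0" "f a = y1" by auto
  have "y2 \<in> f ` {0<..}" using im fx e by (auto simp: y2_def)
  then obtain b where b: "b > 0" "f b = y2" by auto
  have ax: "a < x"
  proof (rule ccontr)
    assume "\<not> a < x"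
    then have "a = x \<or> x < a" by auto
    then show False using md[of x a] a x e by (auto simp: y1_def)
  qed
  have xb: "x < b"
  proof (rule ccontr)
    assume "\<not> x < b"
    then have "b = x \<or> b < x" by auto
    then show False using md[of b x] b x e fx by (auto simp: y2_def)
  qed
  show "\<exists>d>0. \<forall>x'\<in>{0<..}. dist x' x < d \<longrightarrow> dist (f x') (f x) < e"
  proof (intro exI[of _ "min (x - a) (b - x)"] conjI ballI impI)
    show "0 < min (x - a) (b - x)" using ax xb by auto
    fix x' :: real assume x': "x' \<in> {0<..}" "dist x' x < min (x - a) (b - x)"
    then have "a < x'" "x' < b" by (auto simp: dist_real_def)
    then have "f x' < f a" "f b < f x'" using md[of a x'] md[of x' b] a b x' by auto
    then show "dist (f x') (f x) < e" using a b e by (auto simp: dist_real_def y1_def y2_def)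
  qed
qed


lemma W_feas:
  fixes d r c p th b lam :: real and du de :: "real \<Rightarrow> real"
  assumes d0: "0 \<le> d" and r0: "0 \<le> r" and c0: "c > 0" and p0: "p > 0" and th0: "th > 0"
    and b0: "b > 0" and l0: "lam \<ge> 0"
    and du_dec: "strict_antimono_on {0<..} du" and du_bij: "bij_betw du {0<..} {0<..}"
    and de_cont: "continuous_on {0..} de" and de_inc: "strict_mono_on {0..} de"
    and de_bij: "bij_betw de {0..} {0..}"
  shows "0 \<le> fst (W d r c p th b du de lam) \<and> fst (W d r c p th b du de lam) \<le> 1
       \<and> 0 \<le> snd (W d r c p th b du de lam) \<and> snd (W d r c p th b du de lam) \<le> 1"
proof -
  have mdu: "\<And>x y. 0 < x \<Longrightarrow> 0 < y \<Longrightarrow> x < y \<Longrightarrow> du y < du x"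
    using monotone_onD[OF du_dec] by simp
  have mde: "\<And>x y. 0 \<le> x \<Longrightarrow> 0 \<le> y \<Longrightarrow> x < y \<Longrightarrow> de x < de y"
    using strict_mono_onD[OF de_inc] by simp
  have imu: "du ` {0<..} = {0<..}" using du_bij by (simp add: bij_betw_def)
  have ime: "de ` {0..} = {0..}" using de_bij by (simp add: bij_betw_def)
  have de0: "de 0 = 0"
  proof -
    obtain w where w: "w \<ge> 0" "de w = 0" using ime by (metis atLeast_iff imageE order_refl)
    have "de 0 \<ge> 0" using ime by auto
    show ?thesis
    proof (cases "w = 0")
      case True then show ?thesis using w by simp
    next
      case False then show ?thesis using mde[of 0 w] w \<open>de 0 \<ge> 0\<close> by simp
    qed
  qed
  have dec: "de c > 0" using mde[of 0 c] c0 de0 by simp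
  have du1: "du 1 > 0" using imu by auto
  define y where "y = (p * c + r * lam) / (b * c)"
  have y0: "y > 0" unfolding y_def using p0 c0 r0 l0 b0 by (intro divide_pos_pos add_pos_nonneg) auto
  define w where "w = inv_into {0..} de y"
  have yim: "y \<in> de ` {0..}" using ime y0 by auto
  have w0: "w \<ge> 0" using inv_into_into[OF yim] by (simp add: w_def)
  have dew: "de w = y" using f_inv_into_f[OF yim] by (simp add: w_def)
  have wpos: "w > 0" using w0 dew de0 y0 by (cases "w = 0") auto
  define a where "a = a_fun c p r de b lam"
  have a_eq: "a = w / c" by (simp add: a_def a_fun_def w_def y_def)
  have a0: "a > 0" using a_eq wpos c0 by simp
  define X where "X = X_fun c p d r lam"
  have X0: "X > 0" unfolding X_def X_fun_def using p0 c0 d0 r0 l0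
    by (intro add_pos_nonneg) auto
  define thr where "thr = (p * c + r * lam) / (c * de c)"
  define C1 where "C1 = (th > (b * c * de c + d * lam) / du 1 \<and> b < thr)"
  define C2 where "C2 = (th > X / du 1 \<and> b \<ge> thr)"
  define C3 where "C3 = (X / du a \<le> th \<and> th \<le> X / du 1)"
  define xi where "xi = inv_into {0<..} du (X / th)"
  define g where "g = (\<lambda>x. th * du x - b * c * de (x * c))"
  have Weq: "W d r c p th b du de lam = (if C1 then (1, 0) else if C2 then (1, 1 - a)
      else if C3 then (xi, xi - a) else (THE x. 0 < x \<and> x \<le> 1 \<and> g x = d * lam, 0))"
    by (simp add: W_def Let_def a_def X_def thr_def C1_def C2_def C3_def xi_def g_def)
  show ?thesis
  proof (cases C1)
    case True then show ?thesis using Weq by simp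
  next
    case nC1: False
    show ?thesis
    proof (cases C2)
      case True
      then have "b \<ge> thr" by (simp add: C2_def)
      then have "b * (c * de c) \<ge> p * c + r * lam"
        using c0 dec by (simp add: thr_def pos_divide_le_eq)
      then have "y \<le> de c" using b0 c0 by (simp add: y_def divide_le_eq algebra_simps)
      then have "w \<le> c" using mde[of c w] w0 c0 dew by force
      then have "a \<le> 1" using a_eq c0 by simp
      then show ?thesis using Weq True nC1 a0 by simp
    next
      case nC2: False
      show ?thesis
      proof (cases C3)
        case True
        have xim: "X / th \<in> du ` {0<..}" using imu X0 th0 by auto
        have xi0: "xi > 0" using inv_into_into[OF xim] by (simp add: xi_def)
        have duxi: "du xi = X / th" using f_inv_into_f[OF xim] by (simp add: xi_def)
        have dua: "du a > 0" using imu a0 by auto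
        have "X / th \<le> du a" using True th0 dua X0 by (simp add: C3_def divide_le_eq mult.commute)
        then have "a \<le> xi" using mdu[of xi a] xi0 a0 duxi by force
        moreover have "du 1 \<le> X / th" using True th0 du1 X0
          by (simp add: C3_def le_divide_eq mult.commute)
        then have "xi \<le> 1" using mdu[of 1 xi] xi0 duxi by force
        ultimately show ?thesis using Weq True nC1 nC2 a0 xi0 by simp
      next
        case nC3: False
        have gdec: "\<And>x x'. 0 < x \<Longrightarrow> x < x' \<Longrightarrow> g x' < g x"
        proof -
          fix x x' :: real assume "0 < x" "x < x'"
          then have "du x' < du x" "de (x * c) < de (x' * c)"
            using mdu[of x x'] mde[of "x*c" "x'*c"] c0 by auto
          then show "g x' < g x" unfolding g_def using th0 b0 c0
            by (smt (verit) mult_strict_left_mono mult_pos_pos)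
        qed
        have g1: "g 1 \<le> d * lam"
        proof (rule ccontr)
          assume "\<not> g 1 \<le> d * lam"
          then have h: "th * du 1 > b * c * de c + d * lam" by (simp add: g_def)
          then have "th > (b * c * de c + d * lam) / du 1" using du1 by (simp add: divide_less_eq)
          then have "b \<ge> thr" using nC1 by (auto simp: C1_def)
          then have "b * (c * de c) \<ge> p * c + r * lam"
            using c0 dec by (simp add: thr_def pos_divide_le_eq)
          then have "th * du 1 > X" using h by (simp add: X_def X_fun_def algebra_simps)
          then have "th > X / du 1" using du1 by (simp add: divide_less_eq)
          then show False using nC2 \<open>b \<ge> thr\<close> by (simp add: C2_def)
        qed
        define Y where "Y = max (du 1 + 1) ((d * lam + b * c * de c + 1) / th)"
        have "Y \<in> du ` {0<..}" using imu du1 by (auto simp: Y_def)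
        then obtain x0 where x0: "x0 > 0" "du x0 = Y" by auto
        have x01: "x0 < 1"
        proof (rule ccontr)
          assume "\<not> x0 < 1"
          then have "du x0 \<le> du 1" using mdu[of 1 x0] by (cases "x0 = 1") auto
          then show False using x0 by (simp add: Y_def)
        qed
        have "de (x0 * c) \<le> de c" using mde[of "x0*c" c] x0 x01 c0 by simp
        moreover have "th * Y \<ge> d * lam + b * c * de c + 1"
        proof -
          have "(d * lam + b * c * de c + 1) / th \<le> Y" by (simp add: Y_def)
          then have "th * ((d * lam + b * c * de c + 1) / th) \<le> th * Y"
            using th0 by (intro mult_left_mono) auto
          then show ?thesis using th0 by simp
        qed
        ultimately have gx0: "g x0 \<ge> d * lam" unfolding g_def using x0 b0 c0
          by (smt (verit) mult_left_mono mult_pos_pos)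
        have cdu: "continuous_on {x0..1} du"
          by (rule continuous_on_subset[OF anti_bij_cont[OF du_dec du_bij]]) (use x0 in auto)
        have cde: "continuous_on {x0..1} (\<lambda>x. de (x * c))"
          by (rule continuous_on_compose2[OF de_cont]) (use x0 c0 in \<open>auto intro!: continuous_intros\<close>)
        have "continuous_on {x0..1} g" unfolding g_def
          by (intro continuous_intros cdu cde)
        then obtain xx where xx: "x0 \<le> xx" "xx \<le> 1" "g xx = d * lam"
          using IVT2'[of g 1 "d * lam" x0] g1 gx0 x01 by auto
        have ex1: "\<exists>!x. 0 < x \<and> x \<le> 1 \<and> g x = d * lam"
        proof (rule ex1I[of _ xx])
          show "0 < xx \<and> xx \<le> 1 \<and> g xx = d * lam" using xx x0 by auto
          fix x assume "0 < x \<and> x \<le> 1 \<and> g x = d * lam"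
          then show "x = xx" using gdec[of x xx] gdec[of xx x] xx x0
            by (cases x xx rule: linorder_cases) auto
        qed
        have "0 < (THE x. 0 < x \<and> x \<le> 1 \<and> g x = d * lam) \<and> (THE x. 0 < x \<and> x \<le> 1 \<and> g x = d * lam) \<le> 1"
          using theI'[OF ex1] by auto
        then show ?thesis using Weq nC1 nC2 nC3 by simp
      qed
    qed
  qed
qed


lemma abel_sum:
  fixes A :: real and lm s :: "nat \<Rightarrow> real"
  shows "(\<Sum>t=1..n. (A - lm t) * (s t - s (t - 1))) =
     A * (s n - s 0) - lm (n + 1) * s n + lm 1 * s 0 + (\<Sum>t=1..n. (lm (t + 1) - lm t) * s t)"
proof (induction n)
  case 0 then show ?case by simp
next
  case (Suc n)
  have "(\<Sum>t=1..Suc n. (A - lm t) * (s t - s (t - 1))) =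
     (\<Sum>t=1..n. (A - lm t) * (s t - s (t - 1))) + (A - lm (Suc n)) * (s (Suc n) - s n)"
    by simp
  also have "\<dots> = A * (s (Suc n) - s 0) - lm (Suc n + 1) * s (Suc n) + lm 1 * s 0
     + ((\<Sum>t=1..n. (lm (t + 1) - lm t) * s t) + (lm (Suc n + 1) - lm (Suc n)) * s (Suc n))"
    using Suc by (simp add: algebra_simps)
  also have "\<dots> = A * (s (Suc n) - s 0) - lm (Suc n + 1) * s (Suc n) + lm 1 * s 0
     + (\<Sum>t=1..Suc n. (lm (t + 1) - lm t) * s t)" by simp
  finally show ?case .
qed

lemma proj_nonexp:
  assumes "0 \<le> z" "z \<le> b" shows "\<bar>proj b y - z\<bar> \<le> \<bar>y - z\<bar>"
  using assms by (auto simp: proj_def)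

lemma proj_rng: "0 \<le> b \<Longrightarrow> 0 \<le> proj b y \<and> proj b y \<le> b"
  by (auto simp: proj_def)

theorem mainTheorem9:
  fixes T :: nat and Q fee dbar rbar :: real
    and d r c p theta beta :: "nat \<Rightarrow> real"
    and u e du de :: "nat \<Rightarrow> real \<Rightarrow> real"
    and eta :: "nat \<Rightarrow> real"
    and xs zs :: "nat \<Rightarrow> real"
    and lamstar :: real
    and lamhat :: "nat \<Rightarrow> real"
  defines "q \<equiv> Q / real T"
  defines "ft \<equiv> (\<lambda>t x z. theta t * u t x - beta t * e t ((x - z) * c t) - p t * c t * z)"
  defines "ht \<equiv> (\<lambda>t x z. d t * x + r t * z)"
  defines "L \<equiv> (\<lambda>t x z lam. ft t x z - lam * (ht t x z - q))"
  defines "S \<equiv> (\<lambda>x z. (\<Sum>t=1..T. ft t (x t) (z t))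
                     - fee * max 0 ((\<Sum>t=1..T. ht t (x t) (z t)) - Q))"
  defines "Xi \<equiv> max \<bar>q - dbar - rbar\<bar> q"
  defines "l \<equiv> (\<lambda>t. q - ht t (xs t) (zs t))"
  defines "lbar \<equiv> (1 / real T) * (\<Sum>t=1..T. l t)"
  defines "Psi \<equiv> Max ((\<lambda>t. \<bar>real t * lbar - (\<Sum>i=1..t. l i)\<bar>) ` {1..T})"
  assumes T_pos: "T \<ge> 1" and Q_pos: "Q > 0" and pi_pos: "fee > 0"
    and dbar_nn: "dbar \<ge> 0" and rbar_nn: "rbar \<ge> 0"
    and d_rng: "\<forall>t\<in>{1..T}. 0 \<le> d t \<and> d t \<le> dbar"
    and r_rng: "\<forall>t\<in>{1..T}. 0 \<le> r t \<and> r t \<le> rbar"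
    and pos: "\<forall>t\<in>{1..T}. c t > 0 \<and> p t > 0 \<and> theta t > 0 \<and> beta t > 0"
    and u_cont: "\<forall>t\<in>{1..T}. continuous_on {0..} (u t)"
    and u_mono: "\<forall>t\<in>{1..T}. mono_on {0..} (u t)"
    and u_conc: "\<forall>t\<in>{1..T}. strict_concave_on {0..} (u t)"
    and u_deriv: "\<forall>t\<in>{1..T}. \<forall>x>0. (u t has_real_derivative du t x) (at x)"
    and du_dec: "\<forall>t\<in>{1..T}. strict_antimono_on {0<..} (du t)"
    and du_bij: "\<forall>t\<in>{1..T}. bij_betw (du t) {0<..} {0<..}"
    and e_mono: "\<forall>t\<in>{1..T}. mono_on {0..} (e t)"
    and e_conv: "\<forall>t\<in>{1..T}. strict_convex_on {0..} (e t)"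
    and e_deriv: "\<forall>t\<in>{1..T}. \<forall>x\<ge>0. (e t has_real_derivative de t x) (at x within {0..})"
    and de_cont: "\<forall>t\<in>{1..T}. continuous_on {0..} (de t)"
    and de_inc: "\<forall>t\<in>{1..T}. strict_mono_on {0..} (de t)"
    and de_bij: "\<forall>t\<in>{1..T}. bij_betw (de t) {0..} {0..}"
    and eta_pos: "\<forall>t\<in>{1..T}. eta t > 0"
    and opt_feas: "\<forall>t\<in>{1..T}. 0 \<le> zs t \<and> zs t \<le> xs t \<and> xs t \<le> 1"
    and opt_max: "\<forall>x z. (\<forall>t\<in>{1..T}. 0 \<le> z t \<and> z t \<le> x t \<and> x t \<le> 1)
                     \<longrightarrow> S x z \<le> S xs zs"
    and lamstar_rng: "0 \<le> lamstar \<and> lamstar \<le> fee"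
    and lamstar_min: "\<forall>lam. 0 \<le> lam \<and> lam \<le> fee \<longrightarrow>
                     (\<Sum>t=1..T. L t (xs t) (zs t) lamstar) \<le> (\<Sum>t=1..T. L t (xs t) (zs t) lam)"
    and lamhat_1: "lamhat 1 = 0"
    and lamhat_step: "\<forall>t\<in>{1..T}.
        lamhat (t + 1) = proj fee (lamhat t + eta t *
          (ht t (fst (W (d t) (r t) (c t) (p t) (theta t) (beta t) (du t) (de t) (lamhat t)))
                (snd (W (d t) (r t) (c t) (p t) (theta t) (beta t) (du t) (de t) (lamhat t))) - q))"
  shows "(\<Sum>t=1..T. L t (xs t) (zs t) lamstar - L t (xs t) (zs t) (lamhat t))
           \<le> Xi * Psi * (\<Sum>t=1..T. eta t)"
proof -
  have Tp: "real T > 0" using T_pos by simp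
  have etap: "\<And>t. t \<in> {1..T} \<Longrightarrow> eta t > 0" using eta_pos by blast
  have q0: "q > 0" using Q_pos Tp by (simp add: q_def)
  define Wt where "Wt = (\<lambda>t. W (d t) (r t) (c t) (p t) (theta t) (beta t) (du t) (de t) (lamhat t))"
  define hW where "hW = (\<lambda>t. ht t (fst (Wt t)) (snd (Wt t)))"
  have step: "\<And>t. t \<in> {1..T} \<Longrightarrow> lamhat (t + 1) = proj fee (lamhat t + eta t * (hW t - q))"
    using lamhat_step by (simp add: hW_def Wt_def)
  have lrng: "\<And>t. t \<in> {1..T} \<Longrightarrow> 0 \<le> lamhat t \<and> lamhat t \<le> fee"
  proof -
    fix t assume t: "t \<in> {1..T}"
    show "0 \<le> lamhat t \<and> lamhat t \<le> fee"
    proof (cases "t = 1")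
      case True then show ?thesis using lamhat_1 pi_pos by simp
    next
      case False
      then have "t - 1 \<in> {1..T}" "t = (t - 1) + 1" using t by auto
      then have "lamhat t = proj fee (lamhat (t - 1) + eta (t - 1) * (hW (t - 1) - q))"
        using step[of "t - 1"] by metis
      then show ?thesis using proj_rng[of fee] pi_pos by simp
    qed
  qed
  have hWb: "\<And>t. t \<in> {1..T} \<Longrightarrow> \<bar>hW t - q\<bar> \<le> Xi"
  proof -
    fix t assume t: "t \<in> {1..T}"
    have F: "0 \<le> fst (Wt t) \<and> fst (Wt t) \<le> 1 \<and> 0 \<le> snd (Wt t) \<and> snd (Wt t) \<le> 1"
      unfolding Wt_def
      using t d_rng r_rng pos lrng[OF t] du_dec du_bij de_cont de_inc de_bij
      by (intro W_feas) auto
    have dr: "0 \<le> d t" "d t \<le> dbar" "0 \<le> r t" "r t \<le> rbar" using t d_rng r_rng by auto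
    have "0 \<le> hW t" unfolding hW_def ht_def using F dr by simp
    moreover have "d t * fst (Wt t) \<le> dbar" using F dr mult_mono[of "d t" dbar "fst (Wt t)" 1] by simp
    moreover have "r t * snd (Wt t) \<le> rbar" using F dr mult_mono[of "r t" rbar "snd (Wt t)" 1] by simp
    ultimately have "0 \<le> hW t" "hW t \<le> dbar + rbar" unfolding hW_def ht_def by auto
    then show "\<bar>hW t - q\<bar> \<le> Xi" unfolding Xi_def by (auto simp: abs_if)
  qed
  have lamstep: "\<And>t. t \<in> {1..T} \<Longrightarrow> \<bar>lamhat (t + 1) - lamhat t\<bar> \<le> eta t * Xi"
  proof -
    fix t assume t: "t \<in> {1..T}"
    have "\<bar>lamhat (t + 1) - lamhat t\<bar> \<le> \<bar>lamhat t + eta t * (hW t - q) - lamhat t\<bar>"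
      unfolding step[OF t] using lrng[OF t] by (intro proj_nonexp) auto
    also have "\<dots> = eta t * \<bar>hW t - q\<bar>" proof -
      have "eta t > 0" using eta_pos t by blast
      then show ?thesis by (simp add: abs_mult)
    qed
    also have "\<dots> \<le> eta t * Xi" using etap[OF t] hWb[OF t] by (intro mult_left_mono) auto
    finally show "\<bar>lamhat (t + 1) - lamhat t\<bar> \<le> eta t * Xi" .
  qed
  define s where "s = (\<lambda>t. (\<Sum>i=1..t. l i) - real t * lbar)"
  have s0: "s 0 = 0" by (simp add: s_def)
  have sT: "s T = 0" using Tp by (simp add: s_def lbar_def)
  have sb: "\<And>t. t \<in> {1..T} \<Longrightarrow> \<bar>s t\<bar> \<le> Psi"
  proof -
    fix t assume t: "t \<in> {1..T}"
    have "\<bar>real t * lbar - (\<Sum>i=1..t. l i)\<bar> \<le> Psi"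
      unfolding Psi_def using t by (intro Max_ge) auto
    then show "\<bar>s t\<bar> \<le> Psi" by (simp add: s_def abs_minus_commute)
  qed
  have Xi0: "Xi \<ge> 0" using q0 by (simp add: Xi_def)
  have lsplit: "\<And>t. t \<in> {1..T} \<Longrightarrow> l t = lbar + (s t - s (t - 1))"
  proof -
    fix t assume t: "t \<in> {1..T}"
    then have "{1..t} = insert t {1..t-1}" "t \<notin> {1..t-1}" by auto
    then have "(\<Sum>i=1..t. l i) = l t + (\<Sum>i=1..t-1. l i)" by simp
    moreover have "real t = real (t - 1) + 1" using t by auto
    ultimately have "s t - s (t - 1) = (l t + (\<Sum>i=1..t-1. l i) - (real (t - 1) + 1) * lbar)
         - ((\<Sum>i=1..t-1. l i) - real (t - 1) * lbar)"
      unfolding s_def by (metis (no_types, lifting))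
    then have "s t - s (t - 1) = l t - lbar" by (simp only: distrib_right)
    then show "l t = lbar + (s t - s (t - 1))" by simp
  qed
  have Ldiff: "\<And>t. L t (xs t) (zs t) lamstar - L t (xs t) (zs t) (lamhat t) = (lamstar - lamhat t) * l t"
    by (simp add: L_def l_def algebra_simps)
  have sumL: "\<And>lam. (\<Sum>t=1..T. L t (xs t) (zs t) lam) = (\<Sum>t=1..T. ft t (xs t) (zs t)) + lam * (real T * lbar)"
  proof -
    fix lam
    have "(\<Sum>t=1..T. L t (xs t) (zs t) lam) = (\<Sum>t=1..T. ft t (xs t) (zs t) + lam * l t)"
      by (simp add: L_def l_def algebra_simps)
    also have "\<dots> = (\<Sum>t=1..T. ft t (xs t) (zs t)) + lam * (\<Sum>t=1..T. l t)"
      by (simp add: sum.distrib sum_distrib_left)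
    also have "(\<Sum>t=1..T. l t) = real T * lbar" using Tp by (simp add: lbar_def)
    finally show "(\<Sum>t=1..T. L t (xs t) (zs t) lam) = (\<Sum>t=1..T. ft t (xs t) (zs t)) + lam * (real T * lbar)" .
  qed
  have first: "\<And>k. k \<in> {1..T} \<Longrightarrow> lbar * (lamstar - lamhat k) \<le> 0"
  proof -
    fix k assume k: "k \<in> {1..T}"
    have "lamstar * (real T * lbar) \<le> lamhat k * (real T * lbar)"
    proof -
      have "(\<Sum>t=1..T. L t (xs t) (zs t) lamstar) \<le> (\<Sum>t=1..T. L t (xs t) (zs t) (lamhat k))"
        using lamstar_min lrng[OF k] by blast
      then show ?thesis unfolding sumL by (rule add_le_imp_le_left)
    qed
    then have "real T * (lbar * (lamstar - lamhat k)) \<le> 0" by (simp only: right_diff_distrib) argo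
    then show "lbar * (lamstar - lamhat k) \<le> 0" using Tp by (metis mult_pos_pos not_le)
  qed
  have "(\<Sum>t=1..T. L t (xs t) (zs t) lamstar - L t (xs t) (zs t) (lamhat t))
      = (\<Sum>t=1..T. lbar * (lamstar - lamhat t) + (lamstar - lamhat t) * (s t - s (t - 1)))"
  proof (rule sum.cong)
    fix t assume t: "t \<in> {1..T}"
    show "L t (xs t) (zs t) lamstar - L t (xs t) (zs t) (lamhat t) =
        lbar * (lamstar - lamhat t) + (lamstar - lamhat t) * (s t - s (t - 1))"
      unfolding Ldiff lsplit[OF t] by (simp only: distrib_left distrib_right mult.commute)
  qed simp
  also have "\<dots> = (\<Sum>t=1..T. lbar * (lamstar - lamhat t)) + (\<Sum>t=1..T. (lamstar - lamhat t) * (s t - s (t - 1)))"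
    by (simp add: sum.distrib)
  also have "(\<Sum>t=1..T. (lamstar - lamhat t) * (s t - s (t - 1))) = (\<Sum>t=1..T. (lamhat (t + 1) - lamhat t) * s t)"
    using abel_sum[of lamstar lamhat s T] s0 sT by simp
  also have "(\<Sum>t=1..T. lbar * (lamstar - lamhat t)) \<le> 0"
    using first by (intro sum_nonpos) auto
  also have "(\<Sum>t=1..T. (lamhat (t + 1) - lamhat t) * s t) \<le> (\<Sum>t=1..T. eta t * Xi * Psi)"
  proof (intro sum_mono)
    fix t assume t: "t \<in> {1..T}"
    have "(lamhat (t + 1) - lamhat t) * s t \<le> \<bar>lamhat (t + 1) - lamhat t\<bar> * \<bar>s t\<bar>"
      by (metis abs_ge_self abs_mult)
    also have "\<dots> \<le> (eta t * Xi) * Psi"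
      using lamstep[OF t] sb[OF t] by (intro mult_mono) auto
    finally show "(lamhat (t + 1) - lamhat t) * s t \<le> eta t * Xi * Psi" .
  qed
  also have "(\<Sum>t=1..T. eta t * Xi * Psi) = Xi * Psi * (\<Sum>t=1..T. eta t)"
    by (simp add: sum_distrib_left algebra_simps)
  finally show ?thesis by simp
qed
end
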